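(* For all real $\alpha,\beta$ with $\beta\neq0$, all integers $n,m\ge0$ and every real $x$, \[ P_{n+m}^{(\alpha,\beta)}(x)=\sum_{j=0}^{n}\sum_{k=0}^{m}\binom{n}{j}\langle m-\beta k\rangle_{n-j}\,S_{\alpha,\beta}(m,k)\,x^kP_j^{(\alpha,\beta)}(x). \] In particular (case $m=1$), \[ P_{n+1}^{(\alpha,\beta)}(x)=-\sum_{j=0}^{n}\binom{n}{j}\Big(\alpha\,(n-j)!+\beta x\,\langle1-\beta\rangle_{n-j}\Big)P_j^{(\alpha,\beta)}(x). \]
   Context: For real $a$ and integer $n\ge 1$, $\langle a\rangle_n:=a(a+1)\cdots(a+n-1)$ and $\langle a\rangle_0:=1$. For real $\alpha,\beta$ and integers $0\le k\le n$, $S_{\alpha,\beta}(n,k):=\frac{1}{k!}\sum_{j=0}^{k}(-1)^{k-j}\binom{k}{j}\langle-\alpha-\beta j\rangle_n$. For real $\alpha,\beta$ with $\beta\neq0$, the polynomials $P_n^{(\alpha,\beta)}(x)$ are defined by $\sum_{n\ge0}P_n^{(\alpha,\beta)}(x)\frac{t^n}{n!}=(1-t)^{\alpha}\exp\big(x((1-t)^{\beta}-1)\big)$ (formal power series in $t$). *)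

theory Defs
  imports Complex_Main "HOL-Computational_Algebra.Formal_Power_Series"
begin

definition S_ab :: "real \<Rightarrow> real \<Rightarrow> nat \<Rightarrow> nat \<Rightarrow> real" where
  "S_ab \<alpha> \<beta> n k = (1 / fact k) *
     (\<Sum>j=0..k. (-1) ^ (k - j) * real (k choose j) * pochhammer (- \<alpha> - \<beta> * real j) n)"

definition one_minus_t_pow :: "real \<Rightarrow> real fps" where
  "one_minus_t_pow a = fps_binomial a oo (- fps_X)"

definition P_gf :: "real \<Rightarrow> real \<Rightarrow> real \<Rightarrow> real fps" where
  "P_gf \<alpha> \<beta> x = one_minus_t_pow \<alpha> * (fps_exp x oo (one_minus_t_pow \<beta> - 1))"

definition P_poly :: "real \<Rightarrow> real \<Rightarrow> nat \<Rightarrow> real \<Rightarrow> real" where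
  "P_poly \<alpha> \<beta> n x = fact n * (fps_nth (P_gf \<alpha> \<beta> x) n)"

end

theory Submission
  imports Defs
begin
unbundle fps_syntax


lemma T_nth: "one_minus_t_pow c $ n = pochhammer (-c) n / fact n"
  unfolding one_minus_t_pow_def fps_compose_uminus'
  by (simp add: gbinomial_pochhammer)

lemma T_mult: "one_minus_t_pow a * one_minus_t_pow b = one_minus_t_pow (a+b)"
  unfolding one_minus_t_pow_def
  by (simp add: fps_compose_mult_distrib[symmetric] fps_binomial_add_mult)

lemma T_zero: "one_minus_t_pow 0 = 1"
  by (simp add: fps_eq_iff T_nth pochhammer_0_left)

lemma T_deriv: "fps_deriv (one_minus_t_pow c) = - fps_const c * one_minus_t_pow (c - 1)"
proof (rule fps_ext)
  fix n
  have "fps_deriv (one_minus_t_pow c) $ n = real (Suc n) * (pochhammer (-c) (Suc n) / fact (Suc n))"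
    by (simp add: T_nth)
  also have "\<dots> = (-c) * pochhammer (-c+1) n / fact n"
    by (simp add: pochhammer_rec field_simps del: of_nat_Suc)
  also have "\<dots> = (- fps_const c * one_minus_t_pow (c - 1)) $ n"
    by (simp add: T_nth)
  finally show "fps_deriv (one_minus_t_pow c) $ n = (- fps_const c * one_minus_t_pow (c - 1)) $ n" .
qed

lemma alt_binom: "k > 0 \<Longrightarrow> (\<Sum>j=0..k. (-1::real) ^ (k - j) * real (k choose j)) = 0"
proof -
  assume "k > 0"
  have "(1 + (-1::real)) ^ k = (\<Sum>j\<le>k. real (k choose j) * 1 ^ j * (-1) ^ (k - j))"
    by (rule binomial_ring)
  then show ?thesis using \<open>k>0\<close> by (simp add: atMost_atLeast0 mult.commute power_0_left)
qed



lemma S_rec0: "S_ab \<alpha> \<beta> (Suc m) 0 = (real m - \<alpha>) * S_ab \<alpha> \<beta> m 0"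
  by (simp add: S_ab_def pochhammer_Suc algebra_simps)

lemma S_recS: "S_ab \<alpha> \<beta> (Suc m) (Suc k) =
   (real m - \<alpha> - \<beta> * real (Suc k)) * S_ab \<alpha> \<beta> m (Suc k) - \<beta> * S_ab \<alpha> \<beta> m k"
proof -
  define K where "K = Suc k"
  define p where "p j = pochhammer (- \<alpha> - \<beta> * real j) m" for j :: nat
  have e1: "pochhammer (- \<alpha> - \<beta> * real j) (Suc m) = p j * (real m - \<alpha> - \<beta> * real K) + \<beta> * (p j * (real K - real j))" for j
    by (simp add: p_def pochhammer_Suc algebra_simps)
  have "S_ab \<alpha> \<beta> (Suc m) K = (1 / fact K) * (\<Sum>j=0..K. (-1) ^ (K - j) * real (K choose j) * (p j * (real m - \<alpha> - \<beta> * real K)))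
     + (1 / fact K) * (\<Sum>j=0..K. (-1) ^ (K - j) * real (K choose j) * (\<beta> * (p j * (real K - real j))))"
  proof -
    have "S_ab \<alpha> \<beta> (Suc m) K = (1 / fact K) * (\<Sum>j=0..K. (-1) ^ (K - j) * real (K choose j) * (p j * (real m - \<alpha> - \<beta> * real K) + \<beta> * (p j * (real K - real j))))"
      unfolding S_ab_def e1 by simp
    then show ?thesis by (simp only: distrib_left sum.distrib)
  qed
  also have "(1 / fact K) * (\<Sum>j=0..K. (-1) ^ (K - j) * real (K choose j) * (p j * (real m - \<alpha> - \<beta> * real K)))
     = (real m - \<alpha> - \<beta> * real K) * S_ab \<alpha> \<beta> m K"
    unfolding S_ab_def p_def sum_distrib_left by (rule sum.cong) (simp_all add: mult_ac)
  also have "(\<Sum>j=0..K. (-1) ^ (K - j) * real (K choose j) * (\<beta> * (p j * (real K - real j))))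
      = (\<Sum>j=0..K. \<beta> * real K * ((-1) ^ (K - j) * real (k choose j) * p j))"
  proof (rule sum.cong[OF refl])
    fix j assume j: "j \<in> {0..K}"
    have "(K - j) * (K choose j) = K * (k choose j)"
      using binomial_absorb_comp[of K j] by (simp add: K_def)
    then have "real (K - j) * real (K choose j) = real K * real (k choose j)"
      by (metis of_nat_mult)
    moreover have "real (K - j) = real K - real j" using j by simp
    ultimately have c: "(real K - real j) * real (K choose j) = real K * real (k choose j)" by simp
    have "(-1) ^ (K - j) * real (K choose j) * (\<beta> * (p j * (real K - real j)))
      = \<beta> * ((-1) ^ (K - j) * p j) * ((real K - real j) * real (K choose j))"
      by (simp only: ac_simps)
    also have "\<dots> = \<beta> * real K * ((-1) ^ (K - j) * real (k choose j) * p j)"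
      unfolding c by (simp only: ac_simps)
    finally show "(-1) ^ (K - j) * real (K choose j) * (\<beta> * (p j * (real K - real j)))
      = \<beta> * real K * ((-1) ^ (K - j) * real (k choose j) * p j)" .
  qed
  also have "\<dots> = \<beta> * real K * (\<Sum>j=0..K. (-1) ^ (K - j) * real (k choose j) * p j)"
    by (simp add: sum_distrib_left)
  also have "(\<Sum>j=0..K. (-1) ^ (K - j) * real (k choose j) * p j) = (\<Sum>j=0..k. (-1) ^ (K - j) * real (k choose j) * p j)"
    by (simp add: K_def)
  also have "\<dots> = - (\<Sum>j=0..k. (-1) ^ (k - j) * real (k choose j) * p j)"
    unfolding sum_negf[symmetric] by (rule sum.cong) (simp_all add: K_def Suc_diff_le)
  finally have "S_ab \<alpha> \<beta> (Suc m) K = (real m - \<alpha> - \<beta> * real K) * S_ab \<alpha> \<beta> m K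
     + (1 / fact K) * (\<beta> * real K * - (\<Sum>j=0..k. (-1) ^ (k - j) * real (k choose j) * p j))" .
  also have "(1 / fact K) * (\<beta> * real K * - (\<Sum>j=0..k. (-1) ^ (k - j) * real (k choose j) * p j)) = - \<beta> * S_ab \<alpha> \<beta> m k"
  proof -
    have f: "real K / fact K = 1 / fact k" by (simp add: K_def)
    show ?thesis unfolding S_ab_def p_def
      by (simp add: f[symmetric] mult_ac)
  qed
  finally show ?thesis by (simp add: K_def)
qed

lemma S_zero: "k > m \<Longrightarrow> S_ab \<alpha> \<beta> m k = 0"
proof (induction m arbitrary: k)
  case 0
  then show ?case using alt_binom[of k] by (simp add: S_ab_def)
next
  case (Suc m)
  then obtain k' where k: "k = Suc k'" by (cases k) auto
  then show ?case using Suc by (simp add: S_recS)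
qed



abbreviation "T \<equiv> one_minus_t_pow"

lemma T0: "T c $ 0 = 1" by (simp add: T_nth)

lemma E_deriv: "fps_deriv (fps_exp x oo (T \<beta> - 1)) =
   fps_const x * (fps_exp x oo (T \<beta> - 1)) * (- fps_const \<beta> * T (\<beta> - 1))"
proof -
  have z: "(T \<beta> - 1) $ 0 = 0" by (simp add: T0)
  show ?thesis
    unfolding fps_compose_deriv[OF z] fps_exp_deriv fps_compose_mult_distrib[OF z]
    by (simp add: T_deriv)
qed

definition L :: "real \<Rightarrow> real \<Rightarrow> real \<Rightarrow> real fps" where
  "L \<alpha> \<beta> x = - fps_const \<alpha> * T (-1) - fps_const (\<beta> * x) * T (\<beta> - 1)"

lemma F_deriv: "fps_deriv (P_gf \<alpha> \<beta> x) = P_gf \<alpha> \<beta> x * L \<alpha> \<beta> x"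
proof -
  have "T (\<alpha> - 1) = T \<alpha> * T (-1)" by (simp add: T_mult)
  moreover have "fps_const (\<beta> * x) = fps_const \<beta> * fps_const x" by simp
  ultimately show ?thesis
    unfolding P_gf_def L_def fps_deriv_mult E_deriv T_deriv
    by (simp del: fps_const_mult fps_const_neg add: algebra_simps)
qed



lemma term_step:
  "fps_deriv (fps_const c * T (\<beta> * real k - real m)) + fps_const c * T (\<beta> * real k - real m) * L \<alpha> \<beta> x
   = fps_const (c * (real m - \<alpha> - \<beta> * real k)) * T (\<beta> * real k - real (Suc m))
     + fps_const (- \<beta> * x * c) * T (\<beta> * real (Suc k) - real (Suc m))"
proof -
  define X where "X = T (\<beta> * real k - real (Suc m))"
  define Y where "Y = T (\<beta> * real (Suc k) - real (Suc m))"
  have x1: "T (\<beta> * real k - real m - 1) = X" unfolding X_def by (simp add: algebra_simps)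
  have x1': "T (\<beta> * real k - (1 + real m)) = X" unfolding X_def by (simp add: algebra_simps)
  have x2: "T (\<beta> * real k - real m) * T (-1) = X" unfolding X_def T_mult by (simp add: algebra_simps)
  have y2: "T (\<beta> * real k - real m) * T (\<beta> - 1) = Y" unfolding Y_def T_mult by (simp add: algebra_simps)
  have "fps_deriv (fps_const c * T (\<beta> * real k - real m)) + fps_const c * T (\<beta> * real k - real m) * L \<alpha> \<beta> x
     = fps_const c * (- fps_const (\<beta> * real k - real m) * X)
       - fps_const c * fps_const \<alpha> * (T (\<beta> * real k - real m) * T (-1))
       - fps_const c * fps_const (\<beta> * x) * (T (\<beta> * real k - real m) * T (\<beta> - 1))"
    unfolding L_def by (simp del: fps_const_mult fps_const_neg add: algebra_simps T_deriv x1 x1')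
  also have "\<dots> = fps_const c * (- fps_const (\<beta> * real k - real m) * X)
       - fps_const c * fps_const \<alpha> * X - fps_const c * fps_const (\<beta> * x) * Y"
    unfolding x2 y2 ..
  also have "\<dots> = fps_const (c * (real m - \<alpha> - \<beta> * real k)) * X + fps_const (- \<beta> * x * c) * Y"
    by (rule fps_ext) (simp add: algebra_simps)
  finally show ?thesis unfolding X_def Y_def .
qed



definition Q :: "real \<Rightarrow> real \<Rightarrow> real \<Rightarrow> nat \<Rightarrow> real fps" where
  "Q \<alpha> \<beta> x m = (\<Sum>k=0..m. fps_const (S_ab \<alpha> \<beta> m k * x ^ k) * T (\<beta> * real k - real m))"

lemma Q_step: "fps_deriv (Q \<alpha> \<beta> x m) + Q \<alpha> \<beta> x m * L \<alpha> \<beta> x = Q \<alpha> \<beta> x (Suc m)"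
proof -
  define c where "c k = S_ab \<alpha> \<beta> m k * x ^ k" for k
  define A where "A k = fps_const (c k * (real m - \<alpha> - \<beta> * real k)) * T (\<beta> * real k - real (Suc m))" for k
  define B where "B k = fps_const (- \<beta> * x * c k) * T (\<beta> * real (Suc k) - real (Suc m))" for k
  have "fps_deriv (Q \<alpha> \<beta> x m) + Q \<alpha> \<beta> x m * L \<alpha> \<beta> x
     = (\<Sum>k=0..m. fps_deriv (fps_const (c k) * T (\<beta> * real k - real m)) + fps_const (c k) * T (\<beta> * real k - real m) * L \<alpha> \<beta> x)"
    unfolding Q_def c_def fps_deriv_sum sum_distrib_right sum.distrib ..
  also have "\<dots> = (\<Sum>k=0..m. A k + B k)"
    unfolding A_def B_def term_step ..
  also have "\<dots> = (\<Sum>k=0..m. A k) + (\<Sum>k=0..m. B k)" by (rule sum.distrib)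
  also have "(\<Sum>k=0..m. A k) = (\<Sum>k=0..Suc m. A k)"
    by (simp add: A_def c_def S_zero)
  also have "\<dots> = A 0 + (\<Sum>k=0..m. A (Suc k))"
    unfolding sum.atLeast0_atMost_Suc_shift comp_def ..
  finally have l: "fps_deriv (Q \<alpha> \<beta> x m) + Q \<alpha> \<beta> x m * L \<alpha> \<beta> x = A 0 + (\<Sum>k=0..m. A (Suc k) + B k)"
    by (simp add: sum.distrib)
  have "Q \<alpha> \<beta> x (Suc m) = fps_const (S_ab \<alpha> \<beta> (Suc m) 0 * x ^ 0) * T (\<beta> * real 0 - real (Suc m))
     + (\<Sum>k=0..m. fps_const (S_ab \<alpha> \<beta> (Suc m) (Suc k) * x ^ Suc k) * T (\<beta> * real (Suc k) - real (Suc m)))"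
    unfolding Q_def sum.atLeast0_atMost_Suc_shift comp_def ..
  also have "fps_const (S_ab \<alpha> \<beta> (Suc m) 0 * x ^ 0) * T (\<beta> * real 0 - real (Suc m)) = A 0"
    by (simp add: A_def c_def S_rec0 mult.commute)
  also have "(\<Sum>k=0..m. fps_const (S_ab \<alpha> \<beta> (Suc m) (Suc k) * x ^ Suc k) * T (\<beta> * real (Suc k) - real (Suc m)))
     = (\<Sum>k=0..m. A (Suc k) + B k)"
  proof (rule sum.cong[OF refl])
    fix k
    have "S_ab \<alpha> \<beta> (Suc m) (Suc k) * x ^ Suc k = c (Suc k) * (real m - \<alpha> - \<beta> * real (Suc k)) + - \<beta> * x * c k"
      by (simp add: c_def S_recS algebra_simps)
    then show "fps_const (S_ab \<alpha> \<beta> (Suc m) (Suc k) * x ^ Suc k) * T (\<beta> * real (Suc k) - real (Suc m)) = A (Suc k) + B k"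
      unfolding A_def B_def by (simp only: fps_const_add[symmetric] distrib_right)
  qed
  finally show ?thesis using l by simp
qed

lemma nth_deriv_F: "fps_nth_deriv m (P_gf \<alpha> \<beta> x) = Q \<alpha> \<beta> x m * P_gf \<alpha> \<beta> x"
proof (induction m)
  case 0
  then show ?case by (simp add: Q_def S_ab_def T_zero)
next
  case (Suc m)
  have "fps_nth_deriv (Suc m) (P_gf \<alpha> \<beta> x) = fps_deriv (Q \<alpha> \<beta> x m * P_gf \<alpha> \<beta> x)"
    by (simp only: fps_nth_deriv_commute Suc.IH)
  also have "\<dots> = (fps_deriv (Q \<alpha> \<beta> x m) + Q \<alpha> \<beta> x m * L \<alpha> \<beta> x) * P_gf \<alpha> \<beta> x"
    by (simp add: fps_deriv_mult F_deriv algebra_simps)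
  finally show ?case by (simp add: Q_step)
qed



lemma nd_add: "fps_nth_deriv (a + b) f = fps_nth_deriv b (fps_nth_deriv a f)"
  by (induction a arbitrary: f) simp_all

lemma coef_T: "fact n * (F * T c) $ n = (\<Sum>j=0..n. real (n choose j) * pochhammer (-c) (n - j) * (fact j * F $ j))"
proof -
  have "fact n * (F * T c) $ n = (\<Sum>j=0..n. fact n * (F $ j * (pochhammer (-c) (n - j) / fact (n - j))))"
    by (simp add: fps_mult_nth T_nth sum_distrib_left)
  also have "\<dots> = (\<Sum>j=0..n. real (n choose j) * pochhammer (-c) (n - j) * (fact j * F $ j))"
  proof (rule sum.cong[OF refl])
    fix j assume "j \<in> {0..n}"
    then have "j \<le> n" by simp
    then have "real (n choose j) = fact n / (fact j * fact (n - j))" by (rule binomial_fact)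
    then show "fact n * (F $ j * (pochhammer (-c) (n - j) / fact (n - j))) = real (n choose j) * pochhammer (-c) (n - j) * (fact j * F $ j)"
      by (simp add: field_simps)
  qed
  finally show ?thesis .
qed

lemma part1:
  "P_poly \<alpha> \<beta> (n + m) x =
           (\<Sum>j=0..n. \<Sum>k=0..m. real (n choose j) * pochhammer (real m - \<beta> * real k) (n - j)
               * S_ab \<alpha> \<beta> m k * x ^ k * P_poly \<alpha> \<beta> j x)"
proof -
  define F where "F = P_gf \<alpha> \<beta> x"
  have "P_poly \<alpha> \<beta> (n + m) x = fps_nth_deriv (m + n) F $ 0"
    unfolding P_poly_def F_def fps_deriv_maclauren_0 by (simp add: add.commute)
  also have "\<dots> = fps_nth_deriv n (fps_nth_deriv m F) $ 0"
    by (simp only: nd_add)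
  also have "\<dots> = fps_nth_deriv n (Q \<alpha> \<beta> x m * F) $ 0"
    by (simp only: F_def nth_deriv_F)
  also have "\<dots> = fact n * (F * Q \<alpha> \<beta> x m) $ n"
    by (simp only: fps_deriv_maclauren_0 mult.commute of_nat_fact)
  also have "F * Q \<alpha> \<beta> x m = (\<Sum>k=0..m. fps_const (S_ab \<alpha> \<beta> m k * x ^ k) * (F * T (\<beta> * real k - real m)))"
    unfolding Q_def sum_distrib_left by (rule sum.cong[OF refl]) (rule mult.left_commute)
  also have "fact n * (\<Sum>k=0..m. fps_const (S_ab \<alpha> \<beta> m k * x ^ k) * (F * T (\<beta> * real k - real m))) $ n
      = fact n * (\<Sum>k=0..m. S_ab \<alpha> \<beta> m k * x ^ k * (F * T (\<beta> * real k - real m)) $ n)"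
    by (simp only: fps_sum_nth fps_mult_left_const_nth)
  also have "\<dots> = (\<Sum>k=0..m. S_ab \<alpha> \<beta> m k * x ^ k * (fact n * (F * T (\<beta> * real k - real m)) $ n))"
    by (simp add: sum_distrib_left mult_ac)
  also have "\<dots> = (\<Sum>k=0..m. \<Sum>j=0..n. real (n choose j) * pochhammer (real m - \<beta> * real k) (n - j)
               * S_ab \<alpha> \<beta> m k * x ^ k * P_poly \<alpha> \<beta> j x)"
    unfolding coef_T sum_distrib_left
    by (rule sum.cong[OF refl], rule sum.cong[OF refl]) (simp add: P_poly_def F_def mult_ac)
  finally show ?thesis by (rule trans) (rule sum.swap)
qed



theorem mainTheorem12:
  fixes \<alpha> \<beta> x :: real and n m :: nat
  assumes "\<beta> \<noteq> 0"
  shows "P_poly \<alpha> \<beta> (n + m) x =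
           (\<Sum>j=0..n. \<Sum>k=0..m. real (n choose j) * pochhammer (real m - \<beta> * real k) (n - j)
               * S_ab \<alpha> \<beta> m k * x ^ k * P_poly \<alpha> \<beta> j x)
       \<and> P_poly \<alpha> \<beta> (n + 1) x =
           - (\<Sum>j=0..n. real (n choose j) *
               (\<alpha> * fact (n - j) + \<beta> * x * pochhammer (1 - \<beta>) (n - j)) * P_poly \<alpha> \<beta> j x)"
proof
  show "P_poly \<alpha> \<beta> (n + m) x =
           (\<Sum>j=0..n. \<Sum>k=0..m. real (n choose j) * pochhammer (real m - \<beta> * real k) (n - j)
               * S_ab \<alpha> \<beta> m k * x ^ k * P_poly \<alpha> \<beta> j x)" by (rule part1)
  have s0: "S_ab \<alpha> \<beta> (Suc 0) 0 = - \<alpha>" by (simp add: S_ab_def)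
  have s1: "S_ab \<alpha> \<beta> (Suc 0) (Suc 0) = - \<beta>" by (simp add: S_ab_def)
  have "P_poly \<alpha> \<beta> (n + 1) x =
           (\<Sum>j=0..n. \<Sum>k=0..1. real (n choose j) * pochhammer (real 1 - \<beta> * real k) (n - j)
               * S_ab \<alpha> \<beta> 1 k * x ^ k * P_poly \<alpha> \<beta> j x)" by (rule part1)
  also have "\<dots> = - (\<Sum>j=0..n. real (n choose j) *
               (\<alpha> * fact (n - j) + \<beta> * x * pochhammer (1 - \<beta>) (n - j)) * P_poly \<alpha> \<beta> j x)"
    unfolding sum_negf[symmetric]
    by (rule sum.cong[OF refl]) (simp add: s0 s1 pochhammer_fact algebra_simps)
  finally show "P_poly \<alpha> \<beta> (n + 1) x = - (\<Sum>j=0..n. real (n choose j) *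
               (\<alpha> * fact (n - j) + \<beta> * x * pochhammer (1 - \<beta>) (n - j)) * P_poly \<alpha> \<beta> j x)" .
qed

end
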